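(* Let $\delta\ge 2$ and $s\in\{1,\dots,n\}$ with $d_s-\delta+1\ge 1$, and let $\tilde d=\sum_{i\ne s}(d_i-1)+d_s-\delta$. If $d\ge\tilde d$ then $\mathcal D^{(\delta,s)}_{\mathcal X}(d)=\mathcal D^{(\delta,s)}_{\mathcal X}(\tilde d)$, and $$\dim_{\mathbb F_q}\mathcal D^{(\delta,s)}_{\mathcal X}(\tilde d)=(d_s-\delta+1)\prod_{i\ne s}d_i .$$ Moreover, if $\tilde d\ge 1$, then $\dim_{\mathbb F_q}\mathcal D^{(\delta,s)}_{\mathcal X}(\tilde d-1)=\dim_{\mathbb F_q}\mathcal D^{(\delta,s)}_{\mathcal X}(\tilde d)-1$.
   Context: Let $\mathbb F_q$ be a finite field, $K_1,\dots,K_n\subseteq\mathbb F_q$ nonempty, $d_i=|K_i|$, and $\mathcal X=K_1\times\cdots\times K_n=\{\boldsymbol\alpha_1,\dots,\boldsymbol\alpha_m\}$ (a fixed enumeration), $m=\prod_{i=1}^n d_i$. Let $\Psi:\mathbb F_q[X_1,\dots,X_n]\to\mathbb F_q^m$, $f\mapsto(f(\boldsymbol\alpha_1),\dots,f(\boldsymbol\alpha_m))$. For $d\ge 0$, $\mathbb F_q[X_1,\dots,X_n]_{\le d}$ is the space of polynomials of degree at most $d$ together with $0$. For integers $\delta\ge 2$ and $s\in\{1,\dots,n\}$, $\mathcal P^{(\delta,s)}_d$ is the set of $f\in\mathbb F_q[X_1,\dots,X_n]_{\le d}$ with $\deg_{X_s}f<d_s-\delta+1$, together with $0$; the $(\delta,s)$-quasi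 affine cartesian code is $\mathcal D^{(\delta,s)}_{\mathcal X}(d)=\Psi(\mathcal P^{(\delta,s)}_d)\subseteq\mathbb F_q^m$. *)

theory Defs
  imports Complex_Main "HOL-Library.Function_Algebras"
begin

text \<open>Multivariate polynomials in X_1..X_n are represented by coefficient functions
  on exponent vectors e :: nat => nat (supported on the index set {1..n}).\<close>

definition qac_monos :: "nat \<Rightarrow> (nat \<Rightarrow> 'a set) \<Rightarrow> nat \<Rightarrow> nat \<Rightarrow> nat \<Rightarrow> (nat \<Rightarrow> nat) set" where
  "qac_monos n K \<delta> s d = {e. (\<forall>i. i \<notin> {1..n} \<longrightarrow> e i = 0) \<and> (\<Sum>i=1..n. e i) \<le> d
       \<and> int (e s) < int (card (K s)) - int \<delta> + 1}"

definition mpoly_eval :: "nat \<Rightarrow> (nat \<Rightarrow> nat) set \<Rightarrow> ((nat \<Rightarrow> nat) \<Rightarrow> 'a::comm_ring_1) \<Rightarrow> (nat \<Rightarrow> 'a) \<Rightarrow> 'a" where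
  "mpoly_eval n M c x = (\<Sum>e\<in>M. c e * (\<Prod>i=1..n. x i ^ e i))"

text \<open>Codewords in F_q^m are represented as functions nat => 'a, zero outside {..<m};
  alpha j is the (j+1)-th point of the enumeration of the grid.\<close>
definition qac_code :: "nat \<Rightarrow> (nat \<Rightarrow> 'a::comm_ring_1 set) \<Rightarrow> nat \<Rightarrow> nat \<Rightarrow> (nat \<Rightarrow> nat \<Rightarrow> 'a) \<Rightarrow> nat \<Rightarrow> nat \<Rightarrow> (nat \<Rightarrow> 'a) set" where
  "qac_code n K \<delta> s alpha m d =
     {(\<lambda>j. if j < m then mpoly_eval n (qac_monos n K \<delta> s d) c (alpha j) else 0) | c. True}"

definition grid :: "nat \<Rightarrow> (nat \<Rightarrow> 'a::zero set) \<Rightarrow> (nat \<Rightarrow> 'a) set" where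
  "grid n K = {x. (\<forall>i\<in>{1..n}. x i \<in> K i) \<and> (\<forall>i. i \<notin> {1..n} \<longrightarrow> x i = 0)}"

definition fdim :: "(nat \<Rightarrow> 'a::field) set \<Rightarrow> nat" where
  "fdim C = Vector_Spaces.vector_space.dim (\<lambda>(c::'a) (v::nat \<Rightarrow> 'a). (\<lambda>j. c * v j)) C"

end

theory Submission imports Defs "HOL-Computational_Algebra.Polynomial" "HOL-Library.FuncSet" begin

global_interpretation V: vector_space "\<lambda>(c::'a::field) (v::nat\<Rightarrow>'a). (\<lambda>j. c * v j)"
  by unfold_locales (auto simp: fun_eq_iff algebra_simps)

lemma fdim_V: "fdim C = V.dim C"
  unfolding fdim_def by simp

lemma sum_app: "(\<Sum>x\<in>A. f x) j = (\<Sum>x\<in>A. f x j)"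
  by (induct A rule: infinite_finite_induct) auto

definition ext0 :: "nat \<Rightarrow> (nat \<Rightarrow> nat) \<Rightarrow> nat \<Rightarrow> nat" where
  "ext0 n f = (\<lambda>i. if i \<in> {1..n} then f i else 0)"

definition mon :: "nat \<Rightarrow> (nat \<Rightarrow> nat) \<Rightarrow> (nat \<Rightarrow> 'a::comm_ring_1) \<Rightarrow> 'a" where
  "mon n e x = (\<Prod>i=1..n. x i ^ e i)"

lemma ext0_inj: "inj_on (ext0 n) (PiE {1..n} B)"
  unfolding inj_on_def ext0_def fun_eq_iff
  by (metis PiE_ext)

lemma ext0_image: "ext0 n ` PiE {1..n} B = {e. (\<forall>i. i \<notin> {1..n} \<longrightarrow> e i = 0) \<and> (\<forall>i\<in>{1..n}. e i \<in> B i)}"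
proof (intro equalityI subsetI)
  fix e assume "e \<in> ext0 n ` PiE {1..n} B"
  then show "e \<in> {e. (\<forall>i. i \<notin> {1..n} \<longrightarrow> e i = 0) \<and> (\<forall>i\<in>{1..n}. e i \<in> B i)}"
    by (auto simp: ext0_def PiE_iff)
next
  fix e assume e: "e \<in> {e. (\<forall>i. i \<notin> {1..n} \<longrightarrow> e i = 0) \<and> (\<forall>i\<in>{1..n}. e i \<in> B i)}"
  have "e = ext0 n (restrict e {1..n})" using e by (auto simp: ext0_def fun_eq_iff)
  moreover have "restrict e {1..n} \<in> PiE {1..n} B" using e by auto
  ultimately show "e \<in> ext0 n ` PiE {1..n} B" by blast
qed

lemma expand:
  fixes p :: "nat \<Rightarrow> 'a::comm_ring_1 poly"
  shows "(\<Prod>i=1..n. poly (p i) (x i)) =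
    (\<Sum>f\<in>ext0 n ` PiE {1..n} (\<lambda>i. {..degree (p i)}). (\<Prod>i=1..n. coeff (p i) (f i)) * mon n f x)"
proof -
  have "(\<Prod>i=1..n. poly (p i) (x i)) = (\<Prod>i=1..n. \<Sum>j\<le>degree (p i). coeff (p i) j * x i ^ j)"
    by (simp add: poly_altdef)
  also have "\<dots> = (\<Sum>g\<in>PiE {1..n} (\<lambda>i. {..degree (p i)}). \<Prod>i=1..n. coeff (p i) (g i) * x i ^ g i)"
    by (rule prod_sum_PiE) auto
  also have "\<dots> = (\<Sum>g\<in>PiE {1..n} (\<lambda>i. {..degree (p i)}). (\<Prod>i=1..n. coeff (p i) (ext0 n g i)) * mon n (ext0 n g) x)"
    unfolding mon_def prod.distrib[symmetric]
    by (intro sum.cong prod.cong) (auto simp: ext0_def)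
  also have "\<dots> = (\<Sum>f\<in>ext0 n ` PiE {1..n} (\<lambda>i. {..degree (p i)}). (\<Prod>i=1..n. coeff (p i) (f i)) * mon n f x)"
    by (simp only: sum.reindex[OF ext0_inj] o_def)
  finally show ?thesis .
qed

locale qsetup =
  fixes K :: "nat \<Rightarrow> ('a::{finite,field}) set"
    and n s \<delta> m :: nat
    and alpha :: "nat \<Rightarrow> nat \<Rightarrow> 'a"
  assumes K_ne: "\<forall>i\<in>{1..n}. K i \<noteq> {}"
    and m_def: "m = (\<Prod>i=1..n. card (K i))"
    and alpha_enum: "bij_betw alpha {..<m} (grid n K)"
    and delta: "\<delta> \<ge> 2"
    and s_in: "s \<in> {1..n}"
    and ds: "int (card (K s)) - int \<delta> + 1 \<ge> 1"
begin

definition mv :: "(nat \<Rightarrow> nat) \<Rightarrow> nat \<Rightarrow> 'a" where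
  "mv e = (\<lambda>j. if j < m then mon n e (alpha j) else 0)"

abbreviation "M d \<equiv> qac_monos n K \<delta> s d"

definition R :: "(nat \<Rightarrow> nat) set" where
  "R = {e. (\<forall>i. i \<notin> {1..n} \<longrightarrow> e i = 0) \<and> (\<forall>i\<in>{1..n}. e i \<in> {..<card (K i)})}"

lemma alpha_grid: "j < m \<Longrightarrow> alpha j \<in> grid n K"
  using alpha_enum by (auto simp: bij_betw_def)

lemma alpha_K: "j < m \<Longrightarrow> i \<in> {1..n} \<Longrightarrow> alpha j i \<in> K i"
  using alpha_grid by (auto simp: grid_def)

lemma cardK: "i \<in> {1..n} \<Longrightarrow> card (K i) \<ge> 1"
  using K_ne by (simp add: Suc_le_eq card_gt_0_iff)

lemma fin_M: "finite (M d)"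
proof -
  have "M d \<subseteq> ext0 n ` PiE {1..n} (\<lambda>_. {..d})"
  proof
    fix e assume e: "e \<in> M d"
    have "\<forall>i\<in>{1..n}. e i \<le> d"
    proof
      fix i assume "i \<in> {1..n}"
      then have "e i \<le> (\<Sum>i=1..n. e i)" by (intro member_le_sum) auto
      then show "e i \<le> d" using e by (auto simp: qac_monos_def)
    qed
    then show "e \<in> ext0 n ` PiE {1..n} (\<lambda>_. {..d})"
      using e unfolding ext0_image by (auto simp: qac_monos_def)
  qed
  then show ?thesis by (rule finite_subset) (auto intro!: finite_imageI finite_PiE)
qed

lemma gen:
  fixes p :: "nat \<Rightarrow> 'a poly"
  assumes "\<forall>j<m. w j = (\<Prod>i=1..n. poly (p i) (alpha j i))" "\<forall>j. j \<ge> m \<longrightarrow> w j = 0"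
  shows "w \<in> V.span (mv ` (ext0 n ` PiE {1..n} (\<lambda>i. {..degree (p i)})))"
proof -
  let ?E = "ext0 n ` PiE {1..n} (\<lambda>i. {..degree (p i)})"
  have "w = (\<Sum>f\<in>?E. (\<lambda>j. (\<Prod>i=1..n. coeff (p i) (f i)) * mv f j))"
  proof (rule ext)
    fix j show "w j = (\<Sum>f\<in>?E. (\<lambda>j. (\<Prod>i=1..n. coeff (p i) (f i)) * mv f j)) j"
      using assms by (cases "j < m") (simp_all add: sum_app mv_def expand[simplified])
  qed
  also have "\<dots> \<in> V.span (mv ` ?E)"
    by (intro V.span_sum V.span_scale V.span_base) auto
  finally show ?thesis .
qed

lemma code_span: "qac_code n K \<delta> s alpha m d = V.span (mv ` M d)"
proof
  let ?cw = "\<lambda>c. (\<lambda>j. if j < m then mpoly_eval n (M d) c (alpha j) else 0)"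
  have cw_sum: "?cw c = (\<Sum>e\<in>M d. (\<lambda>j. c e * mv e j))" for c
  proof (rule ext)
    fix j show "?cw c j = (\<Sum>e\<in>M d. (\<lambda>j. c e * mv e j)) j"
      by (cases "j < m") (simp_all add: sum_app mv_def mpoly_eval_def mon_def)
  qed
  show "qac_code n K \<delta> s alpha m d \<subseteq> V.span (mv ` M d)"
  proof
    fix v assume "v \<in> qac_code n K \<delta> s alpha m d"
    then obtain c where v: "v = ?cw c" unfolding qac_code_def by blast
    have "(\<Sum>e\<in>M d. (\<lambda>j. c e * mv e j)) \<in> V.span (mv ` M d)"
      by (intro V.span_sum V.span_scale V.span_base) auto
    then show "v \<in> V.span (mv ` M d)" using v cw_sum by simp
  qed
  have sub: "V.subspace (qac_code n K \<delta> s alpha m d)"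
    unfolding V.subspace_def qac_code_def
  proof (intro conjI ballI allI)
    show "0 \<in> {?cw c |c. True}"
      by (rule CollectI, rule exI[of _ "\<lambda>_. 0"]) (simp add: fun_eq_iff mpoly_eval_def)
  next
    fix x y assume "x \<in> {?cw c |c. True}" "y \<in> {?cw c |c. True}"
    then obtain c1 c2 where "x = ?cw c1" "y = ?cw c2" by blast
    then show "x + y \<in> {?cw c |c. True}"
      by (intro CollectI exI[of _ "\<lambda>e. c1 e + c2 e"])
         (simp add: fun_eq_iff mpoly_eval_def sum.distrib distrib_right)
  next
    fix a x assume "x \<in> {?cw c |c. True}"
    then obtain c1 where "x = ?cw c1" by blast
    then show "(\<lambda>j. a * x j) \<in> {?cw c |c. True}"
      by (intro CollectI exI[of _ "\<lambda>e. a * c1 e"])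
         (simp add: fun_eq_iff mpoly_eval_def sum_distrib_left mult.assoc)
  qed
  have "mv ` M d \<subseteq> qac_code n K \<delta> s alpha m d"
  proof
    fix v assume "v \<in> mv ` M d"
    then obtain e where e: "e \<in> M d" "v = mv e" by blast
    have dl: "(\<Sum>x\<in>M d. (if x = e then 1 else 0) * g x) = g e" for g :: "(nat \<Rightarrow> nat) \<Rightarrow> 'a"
    proof -
      have "(\<Sum>x\<in>M d. (if x = e then 1 else 0) * g x) = (\<Sum>x\<in>M d. if x = e then g x else 0)"
        by (rule sum.cong) auto
      also have "\<dots> = g e" using e fin_M by simp
      finally show ?thesis .
    qed
    have "v = ?cw (\<lambda>e'. if e' = e then 1 else 0)"
    proof (rule ext)
      fix j show "v j = ?cw (\<lambda>e'. if e' = e then 1 else 0) j"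
        using e by (cases "j < m") (simp_all add: mv_def mpoly_eval_def mon_def dl)
    qed
    then show "v \<in> qac_code n K \<delta> s alpha m d" unfolding qac_code_def by blast
  qed
  then show "V.span (mv ` M d) \<subseteq> qac_code n K \<delta> s alpha m d"
    using sub by (rule V.span_minimal)
qed

lemma reduce:
  assumes e: "e \<in> M d"
  shows "mv e \<in> V.span (mv ` (M d \<inter> R))"
proof -
  define P where "P i = (\<Prod>a\<in>K i. [:-a,1:])" for i
  define p where "p i = monom 1 (e i) mod P i" for i
  have P0: "P i \<noteq> 0" for i by (simp add: P_def)
  have degP: "degree (P i) = card (K i)" for i
    unfolding P_def by (subst degree_prod_eq_sum_degree) auto
  have rootP: "t \<in> K i \<Longrightarrow> poly (P i) t = 0" for t i
    by (auto simp: P_def poly_prod)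
  have hpoly: "t \<in> K i \<Longrightarrow> poly (p i) t = t ^ e i" for t i
  proof -
    assume t: "t \<in> K i"
    have "monom 1 (e i) div P i * P i + monom 1 (e i) mod P i = monom 1 (e i)"
      by (rule div_mult_mod_eq)
    then have "poly (monom 1 (e i)) t = poly (monom 1 (e i) div P i) t * poly (P i) t + poly (monom 1 (e i) mod P i) t"
      by (metis poly_add poly_mult)
    then show ?thesis using rootP[OF t] by (simp add: p_def poly_monom)
  qed
  have hdeg1: "degree (p i) \<le> e i" for i
  proof (cases "e i < card (K i)")
    case True
    then have "p i = monom 1 (e i)" unfolding p_def
      by (intro mod_poly_less) (simp add: degP degree_monom_eq)
    then show ?thesis by (simp add: degree_monom_eq)
  next
    case False
    from degree_mod_less[OF P0, of "monom 1 (e i)" i] show ?thesis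
      using False degP by (auto simp: p_def)
  qed
  have hdeg2: "i \<in> {1..n} \<Longrightarrow> degree (p i) < card (K i)" for i
    using degree_mod_less[OF P0, of "monom 1 (e i)" i] degP cardK[of i]
    by (auto simp: p_def)
  have "mv e \<in> V.span (mv ` (ext0 n ` PiE {1..n} (\<lambda>i. {..degree (p i)})))"
  proof (rule gen)
    show "\<forall>j<m. mv e j = (\<Prod>i=1..n. poly (p i) (alpha j i))"
      using alpha_K by (auto simp: mv_def mon_def hpoly intro!: prod.cong)
    show "\<forall>j. m \<le> j \<longrightarrow> mv e j = 0" by (simp add: mv_def)
  qed
  moreover have "ext0 n ` PiE {1..n} (\<lambda>i. {..degree (p i)}) \<subseteq> M d \<inter> R"
  proof
    fix f assume "f \<in> ext0 n ` PiE {1..n} (\<lambda>i. {..degree (p i)})"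
    then have f: "\<forall>i. i \<notin> {1..n} \<longrightarrow> f i = 0" "\<forall>i\<in>{1..n}. f i \<le> degree (p i)"
      unfolding ext0_image by auto
    have fe: "\<forall>i\<in>{1..n}. f i \<le> e i" using f hdeg1 le_trans by blast
    have "(\<Sum>i=1..n. f i) \<le> (\<Sum>i=1..n. e i)" using fe by (intro sum_mono) auto
    moreover have "int (f s) \<le> int (e s)" using fe s_in by simp
    moreover have "\<forall>i\<in>{1..n}. f i < card (K i)" using f hdeg2 le_less_trans by blast
    ultimately show "f \<in> M d \<inter> R"
      using e f unfolding qac_monos_def R_def by auto
  qed
  ultimately show ?thesis using V.span_mono[OF image_mono] by blast
qed

lemma prod_ind: "finite A \<Longrightarrow> (\<Prod>i\<in>A. if Q i then (1::'b::comm_semiring_1) else 0) = (if \<forall>i\<in>A. Q i then 1 else 0)"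
  by (induct A rule: finite_induct) auto

lemma ind_in_span:
  assumes j0: "j0 < m"
  shows "(\<lambda>j. if j = j0 then 1 else 0) \<in> V.span (mv ` R)"
proof -
  define a where "a = alpha j0"
  define q where "q i = smult (inverse (\<Prod>b\<in>K i - {a i}. (a i - b))) (\<Prod>b\<in>K i - {a i}. [:-b,1:])" for i
  have qpoly: "i \<in> {1..n} \<Longrightarrow> t \<in> K i \<Longrightarrow> poly (q i) t = (if t = a i then 1 else 0)" for i t
  proof -
    assume i: "i \<in> {1..n}" and t: "t \<in> K i"
    show ?thesis
    proof (cases "t = a i")
      case True
      have "(\<Prod>b\<in>K i - {a i}. (a i - b)) \<noteq> 0" by simp
      moreover have "(\<Prod>b\<in>K i - {a i}. (- b + a i)) = (\<Prod>b\<in>K i - {a i}. (a i - b))"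
        by (intro prod.cong) auto
      ultimately show ?thesis using True by (simp add: q_def poly_prod)
    next
      case False
      then have "(\<Prod>b\<in>K i - {a i}. (- b + t)) = 0" using t
        by (subst prod_zero_iff) auto
      then show ?thesis using False by (simp add: q_def poly_prod)
    qed
  qed
  have qdeg: "i \<in> {1..n} \<Longrightarrow> degree (q i) < card (K i)" for i
  proof -
    assume i: "i \<in> {1..n}"
    have ai: "a i \<in> K i" using alpha_K[OF j0 i] a_def by simp
    have "degree (q i) \<le> degree (\<Prod>b\<in>K i - {a i}. [:-b,1:])" unfolding q_def by (rule degree_smult_le)
    also have "\<dots> \<le> (\<Sum>b\<in>K i - {a i}. 1)"
      by (rule order_trans[OF degree_prod_sum_le]) auto
    also have "\<dots> = card (K i) - 1" using ai by simp
    also have "\<dots> < card (K i)" using cardK[OF i] by simp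
    finally show ?thesis .
  qed
  have inj: "inj_on alpha {..<m}" using alpha_enum by (simp add: bij_betw_def)
  have "(\<lambda>j. if j = j0 then 1 else 0) \<in> V.span (mv ` (ext0 n ` PiE {1..n} (\<lambda>i. {..degree (q i)})))"
  proof (rule gen)
    show "\<forall>j<m. (if j = j0 then 1 else 0) = (\<Prod>i=1..n. poly (q i) (alpha j i))"
    proof (intro allI impI)
      fix j assume j: "j < m"
      have "(\<Prod>i=1..n. poly (q i) (alpha j i)) = (\<Prod>i=1..n. if alpha j i = a i then 1 else 0)"
        using alpha_K[OF j] by (intro prod.cong) (auto simp: qpoly)
      also have "\<dots> = (if \<forall>i\<in>{1..n}. alpha j i = a i then 1 else 0)" by (rule prod_ind) simp
      also have "(\<forall>i\<in>{1..n}. alpha j i = a i) \<longleftrightarrow> j = j0"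
      proof
        assume h: "\<forall>i\<in>{1..n}. alpha j i = a i"
        have "alpha j = alpha j0"
          using h alpha_grid[OF j] alpha_grid[OF j0] unfolding a_def grid_def
          by (auto simp: fun_eq_iff)
        then show "j = j0" using inj j j0 by (auto simp: inj_on_def)
      qed (simp add: a_def)
      finally show "(if j = j0 then 1 else 0) = (\<Prod>i=1..n. poly (q i) (alpha j i))" by simp
    qed
    show "\<forall>j. m \<le> j \<longrightarrow> (if j = j0 then 1 else 0) = 0" using j0 by auto
  qed
  moreover have "ext0 n ` PiE {1..n} (\<lambda>i. {..degree (q i)}) \<subseteq> R"
    unfolding ext0_image R_def using qdeg by (auto simp: le_less_trans)
  ultimately show ?thesis using V.span_mono[OF image_mono] by blast
qed

lemma R_eq: "R = ext0 n ` PiE {1..n} (\<lambda>i. {..<card (K i)})"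
  unfolding ext0_image R_def by simp

lemma finR: "finite R"
  unfolding R_eq by (auto intro!: finite_imageI finite_PiE)

lemma cardR: "card R = m"
  unfolding R_eq m_def by (subst card_image[OF ext0_inj]) (simp add: card_PiE)

lemma indep_R: "V.independent (mv ` R) \<and> inj_on mv R"
proof -
  define ind where "ind j0 = (\<lambda>j::nat. if j = j0 then (1::'a) else 0)" for j0 :: nat
  define I where "I = ind ` {..<m}"
  have indI: "V.independent I"
    unfolding V.independent_explicit_module
  proof (intro allI impI)
    fix t u v assume t: "finite t" "t \<subseteq> I" "(\<Sum>v\<in>t. (\<lambda>j. u v * v j)) = 0" "v \<in> t"
    then obtain j0 where v: "v = ind j0" unfolding I_def by blast
    have "0 = (\<Sum>w\<in>t. (\<lambda>j. u w * w j)) j0" using t(3) by simp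
    also have "\<dots> = (\<Sum>w\<in>t. u w * w j0)" by (simp add: sum_app)
    also have "\<dots> = u v * v j0 + (\<Sum>w\<in>t - {v}. u w * w j0)" using t by (simp add: sum.remove)
    also have "(\<Sum>w\<in>t - {v}. u w * w j0) = 0"
    proof (rule sum.neutral, rule ballI)
      fix w assume w: "w \<in> t - {v}"
      then obtain j1 where j1: "w = ind j1" using t unfolding I_def by blast
      then have "j1 \<noteq> j0" using w v by auto
      then show "u w * w j0 = 0" using j1 by (simp add: ind_def)
    qed
    finally show "u v = 0" using v by (simp add: ind_def)
  qed
  have injind: "inj_on ind {..<m}"
    by (auto simp: inj_on_def ind_def fun_eq_iff split: if_splits)
  have cardI: "card I = m" unfolding I_def by (simp add: card_image[OF injind])
  have IR: "I \<subseteq> V.span (mv ` R)" unfolding I_def ind_def using ind_in_span by auto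
  have fin: "finite (mv ` R)" using finR by simp
  have "card I \<le> card (mv ` R)" using V.independent_span_bound[OF fin indI IR] by simp
  moreover have "card (mv ` R) \<le> card R" by (rule card_image_le[OF finR])
  ultimately have cR: "card (mv ` R) = card R" using cardI cardR by simp
  then have inj: "inj_on mv R" using eq_card_imp_inj_on finR by blast
  have "V.independent (mv ` R)"
  proof
    assume "V.dependent (mv ` R)"
    then obtain a where a: "a \<in> mv ` R" "a \<in> V.span (mv ` R - {a})" unfolding V.dependent_def by blast
    have "mv ` R \<subseteq> V.span (mv ` R - {a})"
      using a(2) by (auto intro: V.span_base)
    then have "V.span (mv ` R) \<subseteq> V.span (mv ` R - {a})"
      by (rule V.span_minimal[OF _ V.subspace_span])
    then have "card I \<le> card (mv ` R - {a})"
      using V.independent_span_bound[OF _ indI] IR fin by auto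
    moreover have "card (mv ` R - {a}) < card (mv ` R)"
      using a(1) fin by (meson card_Diff1_less)
    ultimately show False using cardI cR cardR by simp
  qed
  then show ?thesis using inj by simp
qed

lemma dim_sub: "S \<subseteq> R \<Longrightarrow> fdim (V.span (mv ` S)) = card S"
proof -
  assume S: "S \<subseteq> R"
  have "V.independent (mv ` S)" using V.independent_mono[OF _ image_mono[OF S]] indep_R by blast
  then have "fdim (V.span (mv ` S)) = card (mv ` S)" by (simp add: fdim_V V.dim_eq_card_independent)
  also have "\<dots> = card S" using indep_R S by (meson card_image inj_on_subset)
  finally show ?thesis .
qed

lemma code_R: "qac_code n K \<delta> s alpha m d = V.span (mv ` (M d \<inter> R))"
proof -
  have "V.span (mv ` M d) \<subseteq> V.span (mv ` (M d \<inter> R))"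
    by (rule V.span_minimal[OF _ V.subspace_span]) (auto intro: reduce)
  moreover have "V.span (mv ` (M d \<inter> R)) \<subseteq> V.span (mv ` M d)"
    by (rule V.span_mono) auto
  ultimately show ?thesis using code_span by blast
qed

definition dt :: nat where
  "dt = (\<Sum>i\<in>{1..n}-{s}. (card (K i) - 1)) + (card (K s) - \<delta>)"

definition B :: "(nat \<Rightarrow> nat) set" where
  "B = {e\<in>R. e s \<le> card (K s) - \<delta>}"

lemma cs: "card (K s) \<ge> \<delta>" using ds by simp

lemma MR: "M d \<inter> R = {e\<in>B. (\<Sum>i=1..n. e i) \<le> d}"
  using cs unfolding qac_monos_def B_def R_def by auto

lemma sum_split: "(\<Sum>i=1..n. f i) = f s + (\<Sum>i\<in>{1..n}-{s}. f i)"
  using s_in by (simp add: sum.remove)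

lemma sumB: "e \<in> B \<Longrightarrow> (\<Sum>i=1..n. e i) \<le> dt"
proof -
  assume e: "e \<in> B"
  have "(\<Sum>i\<in>{1..n}-{s}. e i) \<le> (\<Sum>i\<in>{1..n}-{s}. (card (K i) - 1))"
  proof (intro sum_mono)
    fix i assume "i \<in> {1..n}-{s}"
    then have "e i < card (K i)" using e by (auto simp: B_def R_def)
    then show "e i \<le> card (K i) - 1" by simp
  qed
  then show ?thesis using e unfolding sum_split dt_def B_def by simp
qed

definition top :: "nat \<Rightarrow> nat" where
  "top = (\<lambda>i. if i \<in> {1..n} then (if i = s then card (K s) - \<delta> else card (K i) - 1) else 0)"

lemma top_B: "top \<in> B"
  using cardK cs delta s_in unfolding top_def B_def R_def by (auto simp: Suc_le_eq)

lemma sum_top: "(\<Sum>i=1..n. top i) = dt"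
  unfolding sum_split dt_def using s_in by (simp add: top_def)

lemma less_top: "e \<in> B \<Longrightarrow> e \<noteq> top \<Longrightarrow> (\<Sum>i=1..n. e i) < dt"
proof -
  assume e: "e \<in> B" "e \<noteq> top"
  have le: "\<forall>i\<in>{1..n}. e i \<le> top i" using e by (auto simp: B_def R_def top_def)
  obtain i where i: "e i \<noteq> top i" using e(2) by (auto simp: fun_eq_iff)
  then have "i \<in> {1..n}" using e(1) by (auto simp: B_def R_def top_def split: if_splits)
  then have "\<exists>i\<in>{1..n}. e i < top i" using le i by force
  then have "(\<Sum>i=1..n. e i) < (\<Sum>i=1..n. top i)" using le by (intro sum_strict_mono_ex1) auto
  then show ?thesis using sum_top by simp
qed

lemma cardB: "card B = (card (K s) - \<delta> + 1) * (\<Prod>i\<in>{1..n}-{s}. card (K i))"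
proof -
  let ?T = "\<lambda>i. if i = s then {..card (K s) - \<delta>} else {..<card (K i)}"
  have "B = ext0 n ` PiE {1..n} ?T"
    unfolding ext0_image B_def R_def using cs delta s_in by (auto simp: Suc_le_eq)
  then have "card B = (\<Prod>i=1..n. card (?T i))"
    by (simp only: card_image[OF ext0_inj] card_PiE finite_atLeastAtMost)
  also have "\<dots> = card (?T s) * (\<Prod>i\<in>{1..n}-{s}. card (?T i))"
    using s_in by (simp add: prod.remove)
  also have "(\<Prod>i\<in>{1..n}-{s}. card (?T i)) = (\<Prod>i\<in>{1..n}-{s}. card (K i))"
    by (intro prod.cong) auto
  finally show ?thesis by simp
qed

lemma main:
  "(\<forall>d\<ge>dt. qac_code n K \<delta> s alpha m d = qac_code n K \<delta> s alpha m dt)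
   \<and> fdim (qac_code n K \<delta> s alpha m dt) = (card (K s) - \<delta> + 1) * (\<Prod>i\<in>{1..n}-{s}. card (K i))
   \<and> (dt \<ge> 1 \<longrightarrow> fdim (qac_code n K \<delta> s alpha m (dt - 1)) = fdim (qac_code n K \<delta> s alpha m dt) - 1)"
proof -
  have BR: "B \<subseteq> R" by (auto simp: B_def)
  have big: "d \<ge> dt \<Longrightarrow> M d \<inter> R = B" for d
    unfolding MR using sumB by (auto intro: order_trans)
  have c1: "\<forall>d\<ge>dt. qac_code n K \<delta> s alpha m d = qac_code n K \<delta> s alpha m dt"
    using big by (simp add: code_R)
  have c2: "fdim (qac_code n K \<delta> s alpha m dt) = card B"
    using big[of dt] by (simp add: code_R dim_sub BR)
  have c3: "fdim (qac_code n K \<delta> s alpha m (dt - 1)) = card B - 1" if "dt \<ge> 1"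
  proof -
    have "M (dt - 1) \<inter> R = B - {top}"
      unfolding MR using less_top sum_top that by fastforce
    then have "fdim (qac_code n K \<delta> s alpha m (dt - 1)) = card (B - {top})"
      using BR dim_sub[of "B - {top}"] by (auto simp: code_R)
    also have "\<dots> = card B - 1" using top_B by simp
    finally show ?thesis .
  qed
  show ?thesis
  proof (intro conjI)
    show "\<forall>d\<ge>dt. qac_code n K \<delta> s alpha m d = qac_code n K \<delta> s alpha m dt" by (fact c1)
    show "fdim (qac_code n K \<delta> s alpha m dt) = (card (K s) - \<delta> + 1) * (\<Prod>i\<in>{1..n}-{s}. card (K i))"
      using c2 cardB by simp
    show "dt \<ge> 1 \<longrightarrow> fdim (qac_code n K \<delta> s alpha m (dt - 1)) = fdim (qac_code n K \<delta> s alpha m dt) - 1"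
      using c2 c3 by simp
  qed
qed

end

theorem mainTheorem3:
  fixes K :: "nat \<Rightarrow> ('a::{finite,field}) set"
    and n s \<delta> m :: nat
    and alpha :: "nat \<Rightarrow> nat \<Rightarrow> 'a"
  assumes K_ne: "\<forall>i\<in>{1..n}. K i \<noteq> {}"
    and m_def: "m = (\<Prod>i=1..n. card (K i))"
    and alpha_enum: "bij_betw alpha {..<m} (grid n K)"
    and delta: "\<delta> \<ge> 2"
    and s_in: "s \<in> {1..n}"
    and ds: "int (card (K s)) - int \<delta> + 1 \<ge> 1"
  shows "let dt = (\<Sum>i\<in>{1..n}-{s}. (card (K i) - 1)) + (card (K s) - \<delta>) in
         (\<forall>d\<ge>dt. qac_code n K \<delta> s alpha m d = qac_code n K \<delta> s alpha m dt)
       \<and> fdim (qac_code n K \<delta> s alpha m dt) = (card (K s) - \<delta> + 1) * (\<Prod>i\<in>{1..n}-{s}. card (K i))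
       \<and> (dt \<ge> 1 \<longrightarrow> fdim (qac_code n K \<delta> s alpha m (dt - 1)) = fdim (qac_code n K \<delta> s alpha m dt) - 1)"
proof -
  interpret qsetup K n s \<delta> m alpha using assms by unfold_locales
  show ?thesis using main unfolding dt_def Let_def .
qed

end
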